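(* Let $p\geq 3$ and let $\Gamma$ be a $p$-hamiltonian graph in normalized form with vertices $v_1,\dots,v_\gamma$. (1) If $\Gamma'$ is a twist of $\Gamma$, then $\Gamma$ and $\Gamma'$ are linked. (2) Suppose $\Gamma$ is 3-edge-connected, fix a chord $d_{i,j}$ with $i<j$, and let $d_{j+1,*}$ be a chord with one endpoint $v_{j+1}$ and other endpoint $v_h$. Suppose that either (a) $j+1<h$, or (b) $i<h<j$ and there exists a third chord $d_{x,y}$ with $1\leq i<h<x<j<j+1<y$. Then the graph obtained from $\Gamma$ by twisting the pair $(d_{i,j},d_{j+1,*})$ into the pair $(d_{i,j+1},d_{j,*})$ (i.e. replacing the chord $v_iv_j$ by a chord $v_iv_{j+1}$ and the chord $v_{j+1}v_h$ by a chord $v_jv_h$) is 3-edge-connected and strongly linked to $\Gamma$.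
   Context: A $p$-hamiltonian graph is a finite connected loopless graph (multiple edges allowed), $p$-regular, with at least 2 vertices, containing a hamiltonian cycle $\Delta$. Normalized form: fix $\Delta$, $\gamma=|V(\Gamma)|$ and label vertices $v_1,\dots,v_\gamma$ so that $\Delta$ consists of edges $e_i$ joining $v_i,v_{i+1}$ (indices mod $\gamma$). Chords are edges not in $\Delta$; $d_{a,b}$ denotes a chord joining $v_a$ and $v_b$. Twist: given two chords $d_{i,j}$ and $d_{k,l}$ (no ordering assumed on indices here), the graph $\Gamma'$ obtained by replacing $d_{i,j}$ with a new chord $d_{i,k}$ joining $v_i,v_k$ and $d_{k,l}$ with a new chord $d_{j,l}$ joining $v_j,v_l$, all else unchanged, is called a twist of $\Gamma$. $\Gamma/e$ denotes contraction of edge $e$. Strongly linked: non-loop edges $e_i\in E(\Gamma_i)$ and an isomorphism $\Gamma_1/e_1\cong\Gamma_2/e_2$ carrying the image vertex of $e_1$ to that of $e_2$. Linked: joined by a finite chain of consecutively strongly linked graphs. 3-edge-connected: at least one vertex and connected after deleting any fewer than 3 edges. *)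

theory Defs
  imports Main
begin

text \<open>Finite multigraphs: vertices and edges are natural numbers; each edge has
  a set of one (loop) or two endpoints.\<close>

record mgraph =
  verts :: "nat set"
  edges :: "nat set"
  ends  :: "nat \<Rightarrow> nat set"

definition wf_mgraph :: "mgraph \<Rightarrow> bool" where
  "wf_mgraph G \<longleftrightarrow> finite (verts G) \<and> finite (edges G) \<and>
     (\<forall>e\<in>edges G. ends G e \<subseteq> verts G \<and> 1 \<le> card (ends G e) \<and> card (ends G e) \<le> 2)"

definition non_loop :: "mgraph \<Rightarrow> nat \<Rightarrow> bool" where
  "non_loop G e \<longleftrightarrow> card (ends G e) = 2"

definition loopless :: "mgraph \<Rightarrow> bool" where
  "loopless G \<longleftrightarrow> (\<forall>e\<in>edges G. non_loop G e)"

text \<open>Degree (for loopless graphs): number of incident edges.\<close>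
definition regular :: "nat \<Rightarrow> mgraph \<Rightarrow> bool" where
  "regular p G \<longleftrightarrow> (\<forall>v\<in>verts G. card {e\<in>edges G. v \<in> ends G e} = p)"

definition adj_via :: "mgraph \<Rightarrow> nat set \<Rightarrow> nat \<Rightarrow> nat \<Rightarrow> bool" where
  "adj_via G F u v \<longleftrightarrow> (\<exists>e\<in>F. u \<in> ends G e \<and> v \<in> ends G e)"

definition connected_via :: "mgraph \<Rightarrow> nat set \<Rightarrow> bool" where
  "connected_via G F \<longleftrightarrow> (\<forall>u\<in>verts G. \<forall>v\<in>verts G. (adj_via G F)\<^sup>*\<^sup>* u v)"

definition connected :: "mgraph \<Rightarrow> bool" where
  "connected G \<longleftrightarrow> connected_via G (edges G)"

definition three_edge_connected :: "mgraph \<Rightarrow> bool" where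
  "three_edge_connected G \<longleftrightarrow> verts G \<noteq> {} \<and>
     (\<forall>S. S \<subseteq> edges G \<longrightarrow> card S < 3 \<longrightarrow> connected_via G (edges G - S))"

definition contr_vertex :: "mgraph \<Rightarrow> nat \<Rightarrow> nat" where
  "contr_vertex G e = Min (ends G e)"

definition contract :: "mgraph \<Rightarrow> nat \<Rightarrow> mgraph" where
  "contract G e =
    (let a = Min (ends G e); b = Max (ends G e); f = (\<lambda>x. if x = b then a else x)
     in \<lparr> verts = verts G - {b}, edges = edges G - {e}, ends = (\<lambda>d. f ` ends G d) \<rparr>)"

definition iso_at :: "mgraph \<Rightarrow> mgraph \<Rightarrow> nat \<Rightarrow> nat \<Rightarrow> bool" where
  "iso_at G H x y \<longleftrightarrow> (\<exists>\<phi> \<psi>. bij_betw \<phi> (verts G) (verts H) \<and> bij_betw \<psi> (edges G) (edges H) \<and>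
      (\<forall>d\<in>edges G. ends H (\<psi> d) = \<phi> ` ends G d) \<and> \<phi> x = y)"

definition strongly_linked :: "mgraph \<Rightarrow> mgraph \<Rightarrow> bool" where
  "strongly_linked G1 G2 \<longleftrightarrow> (\<exists>e1\<in>edges G1. \<exists>e2\<in>edges G2. non_loop G1 e1 \<and> non_loop G2 e2 \<and>
      iso_at (contract G1 e1) (contract G2 e2) (contr_vertex G1 e1) (contr_vertex G2 e2))"

definition linked :: "mgraph \<Rightarrow> mgraph \<Rightarrow> bool" where
  "linked = (\<lambda>G H. wf_mgraph G \<and> wf_mgraph H \<and> strongly_linked G H)\<^sup>*\<^sup>*"

text \<open>p-hamiltonian graph in normalized form: vertices v_1..v_gamma are the
  numbers 1..gamma, and cyc i is the hamiltonian-cycle edge e_i joining v_i and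
  v_(i+1) (indices mod gamma).\<close>
definition nxt :: "nat \<Rightarrow> nat \<Rightarrow> nat" where
  "nxt \<gamma> i = i mod \<gamma> + 1"

definition p_ham_normal :: "nat \<Rightarrow> nat \<Rightarrow> mgraph \<Rightarrow> (nat \<Rightarrow> nat) \<Rightarrow> bool" where
  "p_ham_normal p \<gamma> G cyc \<longleftrightarrow> wf_mgraph G \<and> 2 \<le> \<gamma> \<and> verts G = {1..\<gamma>} \<and>
     loopless G \<and> connected G \<and> regular p G \<and>
     inj_on cyc {1..\<gamma>} \<and> cyc ` {1..\<gamma>} \<subseteq> edges G \<and>
     (\<forall>i\<in>{1..\<gamma>}. ends G (cyc i) = {i, nxt \<gamma> i})"

definition chords :: "nat \<Rightarrow> mgraph \<Rightarrow> (nat \<Rightarrow> nat) \<Rightarrow> nat set" where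
  "chords \<gamma> G cyc = edges G - cyc ` {1..\<gamma>}"

definition twist_graph :: "mgraph \<Rightarrow> nat \<Rightarrow> nat \<Rightarrow> nat \<Rightarrow> nat \<Rightarrow> nat \<Rightarrow> nat \<Rightarrow> mgraph" where
  "twist_graph G c1 c2 i j k l = G\<lparr> ends := (ends G)(c1 := {i, k}, c2 := {j, l}) \<rparr>"

definition is_twist :: "nat \<Rightarrow> mgraph \<Rightarrow> (nat \<Rightarrow> nat) \<Rightarrow> mgraph \<Rightarrow> bool" where
  "is_twist \<gamma> G cyc G' \<longleftrightarrow> (\<exists>c1 c2 i j k l.
      c1 \<in> chords \<gamma> G cyc \<and> c2 \<in> chords \<gamma> G cyc \<and> c1 \<noteq> c2 \<and>
      ends G c1 = {i, j} \<and> ends G c2 = {k, l} \<and> i \<noteq> k \<and> j \<noteq> l \<and>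
      G' = twist_graph G c1 c2 i j k l)"

end

theory Submission
  imports Defs
begin


lemma wf_upd:
  assumes "wf_mgraph H" "a \<in> verts H" "v \<in> verts H"
  shows "wf_mgraph (H\<lparr>ends := (ends H)(c := {a,v})\<rparr>)"
  using assms unfolding wf_mgraph_def by (auto simp: card_insert_if)

lemma nxt_ne: "2 \<le> \<gamma> \<Longrightarrow> v \<in> {1..\<gamma>} \<Longrightarrow> nxt \<gamma> v \<noteq> v"
  unfolding nxt_def by (cases "v = \<gamma>") auto

lemma nxt_in: "2 \<le> \<gamma> \<Longrightarrow> v \<in> {1..\<gamma>} \<Longrightarrow> nxt \<gamma> v \<in> {1..\<gamma>}"
  unfolding nxt_def by (auto intro!: Suc_leI)

lemma nxt_lt: "v < \<gamma> \<Longrightarrow> nxt \<gamma> v = Suc v"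
  unfolding nxt_def by auto

lemma f_same: "v \<noteq> w \<Longrightarrow> (\<lambda>x. if x = Max {v,w} then Min {v,w} else x) v = (\<lambda>x. if x = Max {v,w} then Min {v,w} else x) w"
  by (cases "v \<le> w") (auto simp: max_def min_def)

lemma iso_refl: "iso_at X X x x"
  unfolding iso_at_def by (rule exI[of _ id], rule exI[of _ id]) auto

lemma slide:
  assumes wf: "wf_mgraph H" and V: "verts H = {1..\<gamma>}" and g: "2 \<le> \<gamma>"
    and C: "cyc ` {1..\<gamma>} \<subseteq> edges H" and CE: "\<forall>k\<in>{1..\<gamma>}. ends H (cyc k) = {k, nxt \<gamma> k}"
    and c: "c \<in> edges H" "c \<notin> cyc ` {1..\<gamma>}" and a: "a \<in> {1..\<gamma>}" and v: "v \<in> {1..\<gamma>}"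
  shows "linked (H\<lparr>ends := (ends H)(c := {a,v})\<rparr>) (H\<lparr>ends := (ends H)(c := {a, nxt \<gamma> v})\<rparr>) \<and>
         linked (H\<lparr>ends := (ends H)(c := {a, nxt \<gamma> v})\<rparr>) (H\<lparr>ends := (ends H)(c := {a,v})\<rparr>)"
proof -
  define H1 where "H1 = H\<lparr>ends := (ends H)(c := {a,v})\<rparr>"
  define H2 where "H2 = H\<lparr>ends := (ends H)(c := {a, nxt \<gamma> v})\<rparr>"
  define e where "e = cyc v"
  have e: "e \<in> edges H" "e \<noteq> c" using C c v unfolding e_def by auto
  have w1: "wf_mgraph H1" unfolding H1_def using wf_upd[OF wf] a v V by auto
  have w2: "wf_mgraph H2" unfolding H2_def using wf_upd[OF wf] a v V nxt_in[OF g v] by auto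
  have ee: "ends H e = {v, nxt \<gamma> v}" using CE v e_def by auto
  have ne: "nxt \<gamma> v \<noteq> v" using nxt_ne[OF g v] .
  have e1: "ends H1 e = {v, nxt \<gamma> v}" "ends H2 e = {v, nxt \<gamma> v}" using ee e unfolding H1_def H2_def by auto
  have nl: "non_loop H1 e" "non_loop H2 e" unfolding non_loop_def using e1 ne by auto
  define f where "f = (\<lambda>x. if x = Max {v, nxt \<gamma> v} then Min {v, nxt \<gamma> v} else x)"
  have "f v = f (nxt \<gamma> v)" unfolding f_def using f_same[of v "nxt \<gamma> v"] ne by metis
  then have fs: "f ` {a, v} = f ` {a, nxt \<gamma> v}" by simp
  have ceq: "contract H1 e = contract H2 e"
  proof -
    have "\<And>d. f ` (((ends H)(c:={a,v})) d) = f ` (((ends H)(c:={a,nxt \<gamma> v})) d)" using fs by simp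
    then have "(\<lambda>d. f ` (((ends H)(c:={a,v})) d)) = (\<lambda>d. f ` (((ends H)(c:={a,nxt \<gamma> v})) d))" by (rule ext)
    then show ?thesis unfolding contract_def Let_def e1 unfolding H1_def H2_def f_def by simp
  qed
  have cv: "contr_vertex H1 e = contr_vertex H2 e" unfolding contr_vertex_def e1 ..
  have eH: "e \<in> edges H1" "e \<in> edges H2" by (simp_all add: H1_def H2_def e)
  have s12: "strongly_linked H1 H2" unfolding strongly_linked_def
    using eH nl by (metis ceq cv iso_refl)
  have s21: "strongly_linked H2 H1" unfolding strongly_linked_def
    using eH nl by (metis ceq cv iso_refl)
  show ?thesis unfolding linked_def H1_def[symmetric] H2_def[symmetric]
    using s12 s21 w1 w2 by auto
qed

lemma linked_trans: "linked A B \<Longrightarrow> linked B C \<Longrightarrow> linked A C"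
  unfolding linked_def by (rule rtranclp_trans)

lemma slide_any:
  assumes wf: "wf_mgraph H" and V: "verts H = {1..\<gamma>}" and g: "2 \<le> \<gamma>"
    and C: "cyc ` {1..\<gamma>} \<subseteq> edges H" and CE: "\<forall>k\<in>{1..\<gamma>}. ends H (cyc k) = {k, nxt \<gamma> k}"
    and c: "c \<in> edges H" "c \<notin> cyc ` {1..\<gamma>}" and a: "a \<in> {1..\<gamma>}" and v: "v \<in> {1..\<gamma>}"
    and w: "w \<in> {1..\<gamma>}"
  shows "linked (H\<lparr>ends := (ends H)(c := {a,v})\<rparr>) (H\<lparr>ends := (ends H)(c := {a,w})\<rparr>)"
proof -
  define U where "U n = H\<lparr>ends := (ends H)(c := {a,n})\<rparr>" for n
  have *: "1 \<le> n \<longrightarrow> n \<le> \<gamma> \<longrightarrow> linked (U 1) (U n) \<and> linked (U n) (U 1)" for n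
  proof (induction n)
    case 0 then show ?case by simp
  next
    case (Suc n)
    show ?case
    proof (cases "n = 0")
      case True then show ?thesis by (simp add: linked_def)
    next
      case False
      show ?thesis
      proof (intro impI)
        assume "Suc n \<le> \<gamma>"
        then have n: "n \<in> {1..\<gamma>}" "n < \<gamma>" using False by auto
        have "linked (U n) (U (Suc n)) \<and> linked (U (Suc n)) (U n)"
          using slide[OF wf V g C CE c a n(1)] nxt_lt[OF n(2)] unfolding U_def by simp
        then have h: "linked (U n) (U (Suc n))" "linked (U (Suc n)) (U n)" by auto
        have ih: "linked (U 1) (U n)" "linked (U n) (U 1)" using Suc.IH n by auto
        show "linked (U 1) (U (Suc n)) \<and> linked (U (Suc n)) (U 1)"
          using linked_trans[OF ih(1) h(1)] linked_trans[OF h(2) ih(2)] by simp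
      qed
    qed
  qed
  have "linked (U v) (U 1)" "linked (U 1) (U w)" using *[of v] *[of w] v w by auto
  then have "linked (U v) (U w)" by (rule linked_trans)
  then show ?thesis by (simp add: U_def)
qed

lemma part1:
  assumes P: "p_ham_normal p \<gamma> G cyc" and T: "is_twist \<gamma> G cyc G'"
  shows "linked G G'"
proof -
  from T obtain c1 c2 i j k l where
    c: "c1 \<in> chords \<gamma> G cyc" "c2 \<in> chords \<gamma> G cyc" "c1 \<noteq> c2"
    and e: "ends G c1 = {i, j}" "ends G c2 = {k, l}" and G': "G' = twist_graph G c1 c2 i j k l"
    unfolding is_twist_def by blast
  have wf: "wf_mgraph G" and V: "verts G = {1..\<gamma>}" and g: "2 \<le> \<gamma>"
    and C: "cyc ` {1..\<gamma>} \<subseteq> edges G" and CE: "\<forall>k\<in>{1..\<gamma>}. ends G (cyc k) = {k, nxt \<gamma> k}"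
    using P unfolding p_ham_normal_def by auto
  have c1: "c1 \<in> edges G" "c1 \<notin> cyc ` {1..\<gamma>}" and c2: "c2 \<in> edges G" "c2 \<notin> cyc ` {1..\<gamma>}"
    using c unfolding chords_def by auto
  have sub: "ends G c1 \<subseteq> {1..\<gamma>}" "ends G c2 \<subseteq> {1..\<gamma>}" using wf c1 c2 V unfolding wf_mgraph_def by auto
  then have ijkl: "i \<in> {1..\<gamma>}" "j \<in> {1..\<gamma>}" "k \<in> {1..\<gamma>}" "l \<in> {1..\<gamma>}" using e by auto
  define H where "H = G\<lparr>ends := (ends G)(c1 := {i,k})\<rparr>"
  have "G = G\<lparr>ends := (ends G)(c1 := {i,j})\<rparr>" using e by (simp add: fun_upd_idem)
  then have L1: "linked G H" unfolding H_def
    using slide_any[OF wf V g C CE c1 ijkl(1) ijkl(2) ijkl(3)] by simp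
  have wfH: "wf_mgraph H" unfolding H_def using wf_upd[OF wf] ijkl V by auto
  have VH: "verts H = {1..\<gamma>}" "edges H = edges G" by (simp_all add: H_def V)
  have CEH: "\<forall>k\<in>{1..\<gamma>}. ends H (cyc k) = {k, nxt \<gamma> k}" using CE c1 by (auto simp: H_def)
  have eH: "ends H c2 = {l, k}" using e c(3) by (auto simp: H_def)
  have "H = H\<lparr>ends := (ends H)(c2 := {l,k})\<rparr>" using eH by (simp add: fun_upd_idem)
  moreover have "G' = H\<lparr>ends := (ends H)(c2 := {l,j})\<rparr>"
    unfolding G' twist_graph_def H_def by (simp add: insert_commute)
  ultimately have L2: "linked H G'"
    using slide_any[OF wfH VH(1) g C[folded VH(2)] CEH c2[folded VH(2)] ijkl(4) ijkl(3) ijkl(2)] by simp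
  show ?thesis using L1 L2 linked_trans by blast
qed



lemma adj_sym: "adj_via H F u v \<Longrightarrow> adj_via H F v u"
  unfolding adj_via_def by blast

lemma R_sym: "(adj_via H F)\<^sup>*\<^sup>* u v \<Longrightarrow> (adj_via H F)\<^sup>*\<^sup>* v u"
  by (induction rule: rtranclp_induct) (auto intro: converse_rtranclp_into_rtranclp adj_sym)

lemma R_edge: "e \<in> F \<Longrightarrow> u \<in> ends H e \<Longrightarrow> v \<in> ends H e \<Longrightarrow> (adj_via H F)\<^sup>*\<^sup>* u v"
  unfolding adj_via_def by (rule r_into_rtranclp) blast

lemma R_path: "(\<forall>k. a \<le> k \<and> k < b \<longrightarrow> cyc k \<in> F \<and> ends H (cyc k) = {k, Suc k}) \<Longrightarrow> a \<le> b \<Longrightarrow> (adj_via H F)\<^sup>*\<^sup>* a b"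
proof (induction b)
  case 0 then show ?case by simp
next
  case (Suc b)
  show ?case
  proof (cases "a = Suc b")
    case True then show ?thesis by simp
  next
    case False
    then have "(adj_via H F)\<^sup>*\<^sup>* a b" using Suc by auto
    moreover have "(adj_via H F)\<^sup>*\<^sup>* b (Suc b)" using Suc.prems False by (intro R_edge[of "cyc b"]) auto
    ultimately show ?thesis by (rule rtranclp_trans)
  qed
qed

definition inA :: "nat \<Rightarrow> nat \<Rightarrow> nat \<Rightarrow> bool" where
  "inA j m u = (if j < m then j < u \<and> u \<le> m else j < u \<or> u \<le> m)"

lemma ham_cut_conn:
  assumes V: "verts H = {1..\<gamma>}" and j: "1 \<le> j" "j < \<gamma>" and m: "m \<in> {1..\<gamma>}"
    and CF: "\<forall>k\<in>{1..\<gamma>}. k \<noteq> j \<longrightarrow> k \<noteq> m \<longrightarrow> cyc k \<in> F"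
    and CE: "\<forall>k\<in>{1..\<gamma>}. ends H (cyc k) = {k, nxt \<gamma> k}"
    and cross: "m = j \<or> (\<exists>e\<in>F. \<exists>u w. u \<in> ends H e \<and> w \<in> ends H e \<and> u \<in> {1..\<gamma>} \<and> w \<in> {1..\<gamma>} \<and> inA j m u \<and> \<not> inA j m w)"
  shows "connected_via H F"
proof -
  define R where "R = (adj_via H F)\<^sup>*\<^sup>*"
  have sym: "R u v \<Longrightarrow> R v u" for u v unfolding R_def by (rule R_sym)
  have tr: "R u v \<Longrightarrow> R v w \<Longrightarrow> R u w" for u v w unfolding R_def by (rule rtranclp_trans)
  have P: "R a b" if "1 \<le> a" "a \<le> b" "b \<le> \<gamma>" "\<forall>k. a \<le> k \<and> k < b \<longrightarrow> k \<noteq> j \<and> k \<noteq> m" for a b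
    unfolding R_def
  proof (rule R_path[OF _ that(2)], intro allI impI)
    fix k assume k: "a \<le> k \<and> k < b"
    then show "cyc k \<in> F \<and> ends H (cyc k) = {k, Suc k}"
      using CF CE that nxt_lt[of k \<gamma>] by auto
  qed
  have W: "R \<gamma> 1" if "\<gamma> \<noteq> m"
  proof -
    have "ends H (cyc \<gamma>) = {\<gamma>, 1}" using CE j by (auto simp: nxt_def)
    moreover have "cyc \<gamma> \<in> F" using CF j that by auto
    ultimately show ?thesis unfolding R_def by (intro R_edge[of "cyc \<gamma>"]) auto
  qed
  have all: "\<forall>v\<in>{1..\<gamma>}. R v j"
  proof (cases "m = j")
    case True
    show ?thesis
    proof
      fix v assume v: "v \<in> {1..\<gamma>}"
      show "R v j"
      proof (cases "v \<le> j")
        case True then show ?thesis using P[of v j] v j \<open>m = j\<close> by auto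
      next
        case False
        have "R v \<gamma>" using P[of v \<gamma>] v False \<open>m = j\<close> by auto
        moreover have "R 1 j" using P[of 1 j] j \<open>m = j\<close> by auto
        ultimately show ?thesis using W tr j \<open>m = j\<close> by (metis less_irrefl)
      qed
    qed
  next
    case mj: False
    then obtain e u w where e: "e \<in> F" "u \<in> ends H e" "w \<in> ends H e" "u \<in> {1..\<gamma>}" "w \<in> {1..\<gamma>}"
      "inA j m u" "\<not> inA j m w" using cross by blast
    have Rin: "R u w" unfolding R_def using R_edge e by metis
    have B: "R v j" if "v \<in> {1..\<gamma>}" "\<not> inA j m v" for v
    proof (cases "j < m")
      case True
      show ?thesis
      proof (cases "v \<le> j")
        case True then show ?thesis using P[of v j] that j \<open>j < m\<close> by auto
      next
        case False
        then have vm: "m < v" using that \<open>j < m\<close> by (auto simp: inA_def)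
        have "R v \<gamma>" using P[of v \<gamma>] that vm \<open>j < m\<close> by auto
        moreover have "R 1 j" using P[of 1 j] j \<open>j < m\<close> by auto
        moreover have "R \<gamma> 1" using W vm that by auto
        ultimately show ?thesis using tr by blast
      qed
    next
      case False
      then have "m < v" "v \<le> j" using that mj by (auto simp: inA_def)
      then show ?thesis using P[of v j] that j by auto
    qed
    have A: "R v (Suc j)" if "v \<in> {1..\<gamma>}" "inA j m v" for v
    proof (cases "j < m")
      case True
      then have "j < v" "v \<le> m" using that by (auto simp: inA_def)
      then have "R (Suc j) v" using P[of "Suc j" v] that by auto
      then show ?thesis by (rule sym)
    next
      case False
      then have jm: "m < j" using mj by auto
      show ?thesis
      proof (cases "j < v")
        case True
        then have "R (Suc j) v" using P[of "Suc j" v] that jm by auto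
        then show ?thesis by (rule sym)
      next
        case False
        then have "v \<le> m" using that jm by (auto simp: inA_def)
        then have "R 1 v" using P[of 1 v] that jm by auto
        moreover have "R (Suc j) \<gamma>" using P[of "Suc j" \<gamma>] j jm by auto
        moreover have "R \<gamma> 1" using W jm j by auto
        ultimately show ?thesis using tr sym by blast
      qed
    qed
    have "R (Suc j) j" using A[OF e(4,6)] B[OF e(5,7)] Rin tr sym by blast
    then show ?thesis using A B tr by blast
  qed
  show ?thesis unfolding connected_via_def V R_def[symmetric] using all sym tr by blast
qed



lemma part2:
  assumes P: "p_ham_normal p \<gamma> G cyc" and T3: "three_edge_connected G"
    and c1: "c1 \<in> chords \<gamma> G cyc" and e1: "ends G c1 = {i, j}" and ij: "i < j"
    and c2: "c2 \<in> chords \<gamma> G cyc" and e2: "ends G c2 = {j + 1, h}"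
    and cond: "j + 1 < h \<or>
        (i < h \<and> h < j \<and> (\<exists>c3 x y. c3 \<in> chords \<gamma> G cyc \<and> c3 \<noteq> c1 \<and> c3 \<noteq> c2 \<and>
            ends G c3 = {x, y} \<and> 1 \<le> i \<and> i < h \<and> h < x \<and> x < j \<and> j < j + 1 \<and> j + 1 < y))"
  shows "three_edge_connected (twist_graph G c1 c2 i j (j + 1) h) \<and>
       strongly_linked G (twist_graph G c1 c2 i j (j + 1) h)"
proof -
  define G' where "G' = twist_graph G c1 c2 i j (j + 1) h"
  have wf: "wf_mgraph G" and V: "verts G = {1..\<gamma>}" and g: "2 \<le> \<gamma>"
    and C: "cyc ` {1..\<gamma>} \<subseteq> edges G" and CE: "\<forall>k\<in>{1..\<gamma>}. ends G (cyc k) = {k, nxt \<gamma> k}"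
    and inj: "inj_on cyc {1..\<gamma>}"
    using P unfolding p_ham_normal_def by auto
  have c1E: "c1 \<in> edges G" "c1 \<notin> cyc ` {1..\<gamma>}" and c2E: "c2 \<in> edges G" "c2 \<notin> cyc ` {1..\<gamma>}"
    using c1 c2 unfolding chords_def by auto
  have c12: "c1 \<noteq> c2" using e1 e2 ij by (auto simp: doubleton_eq_iff)
  have ends_sub: "d \<in> edges G \<Longrightarrow> ends G d \<subseteq> {1..\<gamma>}" for d using wf V unfolding wf_mgraph_def by auto
  have rng: "i \<in> {1..\<gamma>}" "j \<in> {1..\<gamma>}" "Suc j \<in> {1..\<gamma>}" "h \<in> {1..\<gamma>}"
    using ends_sub[OF c1E(1)] ends_sub[OF c2E(1)] e1 e2 by auto
  then have jg: "1 \<le> j" "j < \<gamma>" by auto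
  have G'v: "verts G' = verts G" "edges G' = edges G" by (simp_all add: G'_def twist_graph_def)
  have G'e: "ends G' c1 = {i, Suc j}" "ends G' c2 = {j, h}"
    "\<And>d. d \<noteq> c1 \<Longrightarrow> d \<noteq> c2 \<Longrightarrow> ends G' d = ends G d"
    using c12 by (simp_all add: G'_def twist_graph_def)
  have CE': "\<forall>k\<in>{1..\<gamma>}. ends G' (cyc k) = {k, nxt \<gamma> k}"
    using CE c1E c2E G'e(3) by (metis image_eqI)
  define e where "e = cyc j"
  have eE: "e \<in> edges G" "e \<noteq> c1" "e \<noteq> c2" using C c1E c2E rng unfolding e_def by auto
  have ee: "ends G e = {j, Suc j}" "ends G' e = {j, Suc j}"
    using CE CE' rng jg nxt_lt[of j \<gamma>] unfolding e_def by auto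
  have SL: "strongly_linked G G'"
  proof -
    define f where "f = (\<lambda>x. if x = Suc j then j else x)"
    have MM: "Max (ends G e) = Suc j" "Min (ends G e) = j" "Max (ends G' e) = Suc j" "Min (ends G' e) = j"
      using ee by auto
    have fe: "f ` ends G d = f ` ends G' d" for d
    proof -
      consider "d = c1" | "d = c2" | "d \<noteq> c1 \<and> d \<noteq> c2" by blast
      then show ?thesis
      proof cases
        case 1 then show ?thesis using e1 G'e ij by (auto simp: f_def)
      next
        case 2 then show ?thesis using e2 G'e by (auto simp: f_def)
      next
        case 3 then show ?thesis using G'e by auto
      qed
    qed
    then have "(\<lambda>d. f ` ends G d) = (\<lambda>d. f ` ends G' d)" by (rule ext)
    then have ceq: "contract G e = contract G' e"
      unfolding contract_def Let_def MM G'v f_def by simp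
    have cv: "contr_vertex G e = contr_vertex G' e" unfolding contr_vertex_def using MM by simp
    have nl: "non_loop G e" "non_loop G' e" unfolding non_loop_def using ee by auto
    show ?thesis unfolding strongly_linked_def using eE(1) G'v nl ceq cv iso_refl by metis
  qed
  have TE: "three_edge_connected G'"
    unfolding three_edge_connected_def
  proof (intro conjI allI impI)
    show "verts G' \<noteq> {}" using G'v V g by auto
    fix S assume S: "S \<subseteq> edges G'" "card S < 3"
    define F where "F = edges G - S"
    define R where "R = (adj_via G' F)\<^sup>*\<^sup>*"
    have sym: "R u v \<Longrightarrow> R v u" for u v unfolding R_def by (rule R_sym)
    have tr: "R u v \<Longrightarrow> R v w \<Longrightarrow> R u w" for u v w unfolding R_def by (rule rtranclp_trans)
    show "connected_via G' (edges G' - S)"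
    proof (cases "e \<in> S")
      case False
      have conG: "connected_via G F" using T3 S G'v unfolding three_edge_connected_def F_def by auto
      have eF: "e \<in> F" using False eE unfolding F_def by auto
      have Rj: "R (Suc j) j" unfolding R_def using R_edge[OF eF, of "Suc j" G' j] ee by auto
      have stp: "R u v" if "adj_via G F u v" for u v
      proof -
        from that obtain d where d: "d \<in> F" "u \<in> ends G d" "v \<in> ends G d" unfolding adj_via_def by blast
        consider "d = c1" | "d = c2" | "d \<noteq> c1 \<and> d \<noteq> c2" by blast
        then show ?thesis
        proof cases
          case 1
          have "R i (Suc j)" unfolding R_def using R_edge[of c1 F i G' "Suc j"] d 1 G'e by auto
          then have X: "R x j" if "x \<in> {i, j}" for x using that tr[OF \<open>R i (Suc j)\<close> Rj] by (auto simp: R_def)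
          have "u \<in> {i,j}" "v \<in> {i,j}" using d 1 e1 by auto
          then show ?thesis using tr[OF X[of u] sym[OF X[of v]]] by simp
        next
          case 2
          have "R h j" unfolding R_def using R_edge[of c2 F h G' j] d 2 G'e by auto
          then have X: "R x j" if "x \<in> {Suc j, h}" for x using that Rj by auto
          have "u \<in> {Suc j, h}" "v \<in> {Suc j, h}" using d 2 e2 by auto
          then show ?thesis using tr[OF X[of u] sym[OF X[of v]]] by simp
        next
          case 3
          then show ?thesis unfolding R_def using R_edge[of d F u G' v] d G'e(3) by auto
        qed
      qed
      have "R u v" if "(adj_via G F)\<^sup>*\<^sup>* u v" for u v
        using that
      proof (induction rule: rtranclp_induct)
        case base then show ?case by (simp add: R_def)
      next
        case (step y z) then show ?case using tr[OF step.IH \<open>adj_via G F y z\<close>[THEN stp]] by simp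
      qed
      then show ?thesis using conG unfolding connected_via_def R_def F_def G'v by blast
    next
      case True
      have finS: "finite S" using S wf G'v unfolding wf_mgraph_def by (auto intro: finite_subset)
      have cS1: "card (S - {e}) \<le> 1" using S True finS by (simp add: card_Diff_singleton)
      obtain m where m: "m \<in> {1..\<gamma>}" and mS: "\<forall>k\<in>{1..\<gamma>}. k \<noteq> j \<longrightarrow> k \<noteq> m \<longrightarrow> cyc k \<notin> S"
        and mS2: "m \<noteq> j \<Longrightarrow> S \<subseteq> {e, cyc m}"
      proof (cases "\<exists>m\<in>{1..\<gamma>}. m \<noteq> j \<and> cyc m \<in> S")
        case True
        then obtain m where m: "m \<in> {1..\<gamma>}" "m \<noteq> j" "cyc m \<in> S" by blast
        have "cyc m \<in> S - {e}" using m inj rng unfolding e_def by (auto dest: inj_onD)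
        then have Se: "S - {e} = {cyc m}" using cS1 finS
          by (metis card_1_singletonE card_0_eq empty_iff finite_Diff le_eq_less_or_eq less_one singletonD)
        show ?thesis
        proof (rule that[OF m(1)])
          show "\<forall>k\<in>{1..\<gamma>}. k \<noteq> j \<longrightarrow> k \<noteq> m \<longrightarrow> cyc k \<notin> S"
          proof (intro ballI impI)
            fix k assume k: "k \<in> {1..\<gamma>}" "k \<noteq> j" "k \<noteq> m"
            then have "cyc k \<noteq> e" "cyc k \<noteq> cyc m" using inj rng m unfolding e_def by (auto dest: inj_onD)
            then show "cyc k \<notin> S" using Se by auto
          qed
          show "S \<subseteq> {e, cyc m}" using Se by auto
        qed
      next
        case False
        show ?thesis by (rule that[OF rng(2)]) (use False in auto)
      qed
      have CF: "\<forall>k\<in>{1..\<gamma>}. k \<noteq> j \<longrightarrow> k \<noteq> m \<longrightarrow> cyc k \<in> F"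
        using mS C unfolding F_def by auto
      have chF: "d \<in> F" if "m \<noteq> j" "d \<in> edges G" "d \<notin> cyc ` {1..\<gamma>}" for d
        using mS2[OF that(1)] that m rng unfolding F_def e_def by auto
      have cross: "m = j \<or> (\<exists>d\<in>F. \<exists>u w. u \<in> ends G' d \<and> w \<in> ends G' d \<and> u \<in> {1..\<gamma>} \<and> w \<in> {1..\<gamma>} \<and> inA j m u \<and> \<not> inA j m w)"
      proof (cases "m = j")
        case True then show ?thesis by simp
      next
        case mj: False
        have cr: "m = j \<or> (\<exists>d\<in>F. \<exists>u w. u \<in> ends G' d \<and> w \<in> ends G' d \<and> u \<in> {1..\<gamma>} \<and> w \<in> {1..\<gamma>} \<and> inA j m u \<and> \<not> inA j m w)"
          if "d \<in> F" "u \<in> ends G' d" "w \<in> ends G' d" "u \<in> {1..\<gamma>}" "w \<in> {1..\<gamma>}" "inA j m u" "\<not> inA j m w" for d u w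
          using that by blast
        have F1: "c1 \<in> F" "c2 \<in> F" using chF[OF mj] c1E c2E by auto
        from cond show ?thesis
        proof
          assume a: "j + 1 < h"
          show ?thesis
          proof (cases "j < m")
            case True
            show ?thesis
            proof (cases "h \<le> m")
              case True
              show ?thesis by (rule cr[OF F1(2), of h j]) (use G'e rng a True \<open>j < m\<close> in \<open>auto simp: inA_def\<close>)
            next
              case False
              show ?thesis by (rule cr[OF F1(1), of "Suc j" i]) (use G'e rng ij False \<open>j < m\<close> in \<open>auto simp: inA_def\<close>)
            qed
          next
            case False
            then have "m < j" using mj by auto
            show ?thesis by (rule cr[OF F1(2), of h j]) (use G'e rng a \<open>m < j\<close> in \<open>auto simp: inA_def\<close>)
          qed
        next
          assume b: "i < h \<and> h < j \<and> (\<exists>c3 x y. c3 \<in> chords \<gamma> G cyc \<and> c3 \<noteq> c1 \<and> c3 \<noteq> c2 \<and>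
            ends G c3 = {x, y} \<and> 1 \<le> i \<and> i < h \<and> h < x \<and> x < j \<and> j < j + 1 \<and> j + 1 < y)"
          then obtain c3 x y where c3: "c3 \<in> chords \<gamma> G cyc" "c3 \<noteq> c1" "c3 \<noteq> c2" "ends G c3 = {x, y}"
            and ord: "i < h" "h < x" "x < j" "j + 1 < y" by blast
          have c3E: "c3 \<in> edges G" "c3 \<notin> cyc ` {1..\<gamma>}" using c3 unfolding chords_def by auto
          have F3: "c3 \<in> F" using chF[OF mj c3E] .
          have xy: "x \<in> {1..\<gamma>}" "y \<in> {1..\<gamma>}" using ends_sub[OF c3E(1)] c3 by auto
          have e3: "ends G' c3 = {x, y}" using G'e(3) c3 by auto
          show ?thesis
          proof (cases "j < m \<or> m < i")
            case True
            show ?thesis by (rule cr[OF F1(1), of "Suc j" i]) (use G'e rng ij True mj in \<open>auto simp: inA_def\<close>)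
          next
            case False
            then have im: "i \<le> m" "m < j" using mj by auto
            show ?thesis
            proof (cases "h \<le> m")
              case True
              show ?thesis by (rule cr[OF F1(2), of h j]) (use G'e rng im True in \<open>auto simp: inA_def\<close>)
            next
              case False
              show ?thesis by (rule cr[OF F3, of y x]) (use e3 xy im ord False in \<open>auto simp: inA_def\<close>)
            qed
          qed
        qed
      qed
      have "connected_via G' F"
        by (rule ham_cut_conn[OF _ jg m CF CE' cross]) (simp add: G'v V)
      then show ?thesis unfolding F_def G'v .
    qed
  qed
  show ?thesis using SL TE unfolding G'_def by simp
qed

theorem mainTheorem8:
  fixes p \<gamma> :: nat and G :: mgraph and cyc :: "nat \<Rightarrow> nat"
  assumes "3 \<le> p" and "p_ham_normal p \<gamma> G cyc"
  shows "(\<forall>G'. is_twist \<gamma> G cyc G' \<longrightarrow> linked G G') \<and>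
    (\<forall>c1 c2 i j h.
       three_edge_connected G \<longrightarrow>
       c1 \<in> chords \<gamma> G cyc \<longrightarrow> ends G c1 = {i, j} \<longrightarrow> i < j \<longrightarrow>
       c2 \<in> chords \<gamma> G cyc \<longrightarrow> ends G c2 = {j + 1, h} \<longrightarrow>
       (j + 1 < h \<or>
        (i < h \<and> h < j \<and> (\<exists>c3 x y. c3 \<in> chords \<gamma> G cyc \<and> c3 \<noteq> c1 \<and> c3 \<noteq> c2 \<and>
            ends G c3 = {x, y} \<and> 1 \<le> i \<and> i < h \<and> h < x \<and> x < j \<and> j < j + 1 \<and> j + 1 < y))) \<longrightarrow>
       three_edge_connected (twist_graph G c1 c2 i j (j + 1) h) \<and>
       strongly_linked G (twist_graph G c1 c2 i j (j + 1) h))"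
proof (intro conjI allI impI)
  fix G' assume "is_twist \<gamma> G cyc G'"
  then show "linked G G'" using part1[OF assms(2)] by blast
next
  fix c1 c2 i j h
  assume "three_edge_connected G" "c1 \<in> chords \<gamma> G cyc" "ends G c1 = {i, j}" "i < j"
    "c2 \<in> chords \<gamma> G cyc" "ends G c2 = {j + 1, h}"
    "j + 1 < h \<or>
        (i < h \<and> h < j \<and> (\<exists>c3 x y. c3 \<in> chords \<gamma> G cyc \<and> c3 \<noteq> c1 \<and> c3 \<noteq> c2 \<and>
            ends G c3 = {x, y} \<and> 1 \<le> i \<and> i < h \<and> h < x \<and> x < j \<and> j < j + 1 \<and> j + 1 < y))"
  note part2[OF assms(2) this]
  then show "three_edge_connected (twist_graph G c1 c2 i j (j + 1) h)"
    "strongly_linked G (twist_graph G c1 c2 i j (j + 1) h)" by auto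
qed

end
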